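(* In the binary model with $\lambda=g=\frac{\sqrt5-1}{2}$, the support $S$ of $\mu$ is almost surely totally disconnected.
   Context: Binary model. Let $T=\{1,2\}^*$ be the set of finite words over $\{1,2\}$ (the rooted binary tree; $v|j$ is the prefix of $v$ of length $j$). Let $\{a_v\}_{v\in T,\,|v|\ge1}$ be i.i.d. random variables with $\mathbb{P}(a_v=0)=\mathbb{P}(a_v=1)=\frac12$. Fix $\lambda\in(0,1)$. For $\omega\in\{1,2\}^{\mathbb{N}}$ put $f(\omega)=\sum_{j\ge1}a_{\omega|j}\lambda^j$. Let $\mu$ be the image under $f$ of the uniform product measure on $\{1,2\}^{\mathbb{N}}$, and $S=f(\{1,2\}^{\mathbb{N}})$ its (random, compact) support. *)

theory Defs
  imports "HOL-Probability.Probability"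
begin

text \<open>Vertices of the rooted binary tree \<open>{1,2}^*\<close> are encoded as \<open>bool list\<close>
  (False ~ 1, True ~ 2); infinite words \<open>{1,2}^\<nat>\<close> as \<open>nat \<Rightarrow> bool\<close>.\<close>

definition prefix_word :: "(nat \<Rightarrow> bool) \<Rightarrow> nat \<Rightarrow> bool list" where
  "prefix_word \<omega> j = map \<omega> [0..<j]"

definition coding_map :: "real \<Rightarrow> (bool list \<Rightarrow> real) \<Rightarrow> (nat \<Rightarrow> bool) \<Rightarrow> real" where
  "coding_map lam a \<omega> = (\<Sum>j. a (prefix_word \<omega> (Suc j)) * lam ^ Suc j)"

definition attractor :: "real \<Rightarrow> (bool list \<Rightarrow> real) \<Rightarrow> real set" where
  "attractor lam a = range (coding_map lam a)"

text \<open>The law of the i.i.d. labels: each \<open>a_v\<close> uniform on {0,1}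
  (the label of the root [] is also drawn but never used).\<close>
definition label_space :: "(bool list \<Rightarrow> real) measure" where
  "label_space = PiM UNIV (\<lambda>_. measure_pmf (pmf_of_set {0, 1}))"

definition totally_disconnected :: "'a::topological_space set \<Rightarrow> bool" where
  "totally_disconnected S \<longleftrightarrow> (\<forall>x\<in>S. connected_component_set S x = {x})"

end

theory Submission
  imports Defs
begin


abbreviation "M0 \<equiv> measure_pmf (pmf_of_set {0, 1::real})"

lemma M0_prob: "prob_space M0" by (rule prob_space_measure_pmf)

lemma L_prob: "prob_space label_space"
  unfolding label_space_def by (rule prob_space_PiM) (rule prob_space_measure_pmf)

interpretation L: prob_space label_space by (rule L_prob)

lemma space_L: "space label_space = UNIV"
  by (simp add: label_space_def space_PiM)

lemma sets_L: "sets label_space = sets (PiM UNIV (\<lambda>_. M0))"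
  by (simp add: label_space_def)

definition sh :: "bool list \<Rightarrow> (bool list \<Rightarrow> real) \<Rightarrow> (bool list \<Rightarrow> real)" where
  "sh v a = (\<lambda>w. a (v @ w))"

lemma sh_meas: "sh v \<in> label_space \<rightarrow>\<^sub>M label_space"
  unfolding sh_def label_space_def
  by (rule measurable_PiM_single') (auto simp: space_PiM intro: measurable_component_singleton)

lemma distr_sh: "distr label_space label_space (sh v) = label_space"
proof -
  have D: "distr (PiM UNIV (\<lambda>_. M0)) (PiM UNIV (\<lambda>i. (\<lambda>_. M0) ((\<lambda>w. v @ w) i))) (\<lambda>\<omega>. \<lambda>n\<in>UNIV. \<omega> ((\<lambda>w. v @ w) n)) = PiM UNIV (\<lambda>i. (\<lambda>_. M0) ((\<lambda>w. v @ w) i))"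
    by (rule distr_PiM_reindex) (auto simp: prob_space_measure_pmf inj_on_def)
  have eq: "(\<lambda>a w. a (v @ w)) = (\<lambda>\<omega>. \<lambda>n\<in>UNIV. \<omega> ((\<lambda>w. v @ w) n))"
    by (auto simp: restrict_def)
  show ?thesis unfolding label_space_def sh_def eq using D by simp
qed

lemma prob_sh:
  assumes "{a. P a} \<in> sets label_space"
  shows "L.prob {a. P (sh v a)} = L.prob {a. P a}"
proof -
  have "L.prob {a. P a} = measure (distr label_space label_space (sh v)) {a. P a}"
    by (simp add: distr_sh)
  also have "\<dots> = L.prob (sh v -` {a. P a} \<inter> space label_space)"
    by (rule measure_distr[OF sh_meas assms])
  finally show ?thesis by (simp add: space_L)
qed

lemma indep_coords: "L.indep_vars (\<lambda>_. M0) (\<lambda>i a. a i) UNIV"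
proof -
  have "L.indep_vars (\<lambda>_. M0) (\<lambda>i a. a i) UNIV \<longleftrightarrow>
    distr label_space (PiM UNIV (\<lambda>_. M0)) (\<lambda>x. \<lambda>i\<in>UNIV. x i) = (PiM UNIV (\<lambda>i. distr label_space M0 (\<lambda>a. a i)))"
    by (rule L.indep_vars_iff_distr_eq_PiM') (auto simp: label_space_def intro: measurable_component_singleton)
  moreover have "distr label_space M0 (\<lambda>a. a i) = M0" for i
    unfolding label_space_def by (rule distr_PiM_component) (auto simp: prob_space_measure_pmf)
  moreover have "distr label_space (PiM UNIV (\<lambda>_. M0)) (\<lambda>x. \<lambda>i\<in>UNIV. x i) = label_space"
  proof -
    have "(\<lambda>x::bool list \<Rightarrow> real. \<lambda>i\<in>UNIV. x i) = (\<lambda>x. x)" by (auto simp: restrict_def)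
    then show ?thesis unfolding label_space_def by (simp add: distr_id2)
  qed
  ultimately show ?thesis by (simp add: label_space_def)
qed


lemma space_M0: "space M0 = UNIV" by simp
lemma sets_M0: "sets M0 = UNIV" by simp

lemma coord_pred: "Measurable.pred label_space (\<lambda>a. Q (a v))"
proof -
  have "(\<lambda>a. a v) \<in> label_space \<rightarrow>\<^sub>M M0"
    unfolding label_space_def by (rule measurable_component_singleton) simp
  moreover have "Measurable.pred M0 Q" by (simp add: pred_def)
  ultimately show ?thesis by (rule measurable_compose)
qed

lemma prob_root: "L.prob {a. a [] = 1} = 1/2" "L.prob {a. a [] \<noteq> 1} = 1/2"
proof -
  have "distr label_space M0 (\<lambda>a. a []) = M0"
    unfolding label_space_def by (rule distr_PiM_component) (auto simp: prob_space_measure_pmf)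
  then have "measure M0 X = L.prob ((\<lambda>a. a []) -` X \<inter> space label_space)" for X
    by (metis measure_distr sets_M0 UNIV_I measurable_component_singleton label_space_def)
  then have "measure M0 X = L.prob {a. a [] \<in> X}" for X by (simp add: space_L vimage_def)
  from this[of "{1}"] this[of "-{1}"] show "L.prob {a. a [] = 1} = 1/2" "L.prob {a. a [] \<noteq> 1} = 1/2"
    by (auto simp: measure_pmf_of_set)
qed


lemma sets_L_PiM: "sets label_space = sets (PiM UNIV (\<lambda>_. M0))" by (simp add: label_space_def)

lemma root_indep:
  assumes Qm: "Measurable.pred label_space Q"
    and Qd: "\<And>a a'. (\<forall>v. v \<noteq> [] \<longrightarrow> a v = a' v) \<Longrightarrow> Q a = Q a'"
    and R: "R = (\<lambda>x::real. x = 1) \<or> R = (\<lambda>x. x \<noteq> 1)"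
  shows "L.prob {a. R (a []) \<and> Q a} = 1/2 * L.prob {a. Q a}"
proof -
  define A :: "bool list set" where "A = {[]}"
  define B :: "bool list set" where "B = - {[]}"
  have ind: "L.indep_var (PiM A (\<lambda>_. M0)) (\<lambda>\<omega>. restrict (\<lambda>i. \<omega> i) A) (PiM B (\<lambda>_. M0)) (\<lambda>\<omega>. restrict (\<lambda>i. \<omega> i) B)"
    by (rule L.indep_var_restrict[OF indep_coords]) (auto simp: A_def B_def)
  define ext :: "(bool list \<Rightarrow> real) \<Rightarrow> (bool list \<Rightarrow> real)" where "ext h = (\<lambda>v. if v = [] then 0 else h v)" for h
  have ext_m: "ext \<in> PiM B (\<lambda>_. M0) \<rightarrow>\<^sub>M label_space"
    unfolding ext_def label_space_def
    apply (rule measurable_PiM_single')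
    subgoal for v by (cases "v = []") (auto simp: B_def intro: measurable_component_singleton)
    by (auto simp: space_PiM)
  define Xa where "Xa = {h \<in> space (PiM A (\<lambda>_. M0)). R (h [])}"
  define Xb where "Xb = {h \<in> space (PiM B (\<lambda>_. M0)). Q (ext h)}"
  have Xa: "Xa \<in> sets (PiM A (\<lambda>_. M0))"
  proof -
    have "(\<lambda>h. h []) \<in> PiM A (\<lambda>_. M0) \<rightarrow>\<^sub>M M0"
      by (rule measurable_component_singleton) (simp add: A_def)
    moreover have "Measurable.pred M0 R" by (simp add: pred_def)
    ultimately have "Measurable.pred (PiM A (\<lambda>_. M0)) (\<lambda>h. R (h []))" by (rule measurable_compose)
    then show ?thesis unfolding Xa_def pred_def .
  qed
  have Xb: "Xb \<in> sets (PiM B (\<lambda>_. M0))"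
  proof -
    have "Measurable.pred (PiM B (\<lambda>_. M0)) (\<lambda>h. Q (ext h))"
      using measurable_compose[OF ext_m Qm] .
    then show ?thesis unfolding Xb_def pred_def .
  qed
  have QQ: "Q (ext (restrict a B)) = Q a" for a
    by (rule Qd) (auto simp: ext_def B_def)
  have "L.prob ((\<lambda>x. (restrict (\<lambda>i. x i) A, restrict (\<lambda>i. x i) B)) -` (Xa \<times> Xb) \<inter> space label_space) =
     L.prob ((\<lambda>x. restrict (\<lambda>i. x i) A) -` Xa \<inter> space label_space) * L.prob ((\<lambda>x. restrict (\<lambda>i. x i) B) -` Xb \<inter> space label_space)"
    by (rule L.indep_varD[OF ind Xa Xb])
  moreover have "(\<lambda>x. (restrict (\<lambda>i. x i) A, restrict (\<lambda>i. x i) B)) -` (Xa \<times> Xb) \<inter> space label_space = {a. R (a []) \<and> Q a}"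
    using QQ by (auto simp: Xa_def Xb_def space_L space_PiM A_def)
  moreover have "(\<lambda>x. restrict (\<lambda>i. x i) A) -` Xa \<inter> space label_space = {a. R (a [])}"
    by (auto simp: Xa_def space_L space_PiM A_def)
  moreover have "(\<lambda>x. restrict (\<lambda>i. x i) B) -` Xb \<inter> space label_space = {a. Q a}"
    using QQ by (auto simp: Xb_def space_L space_PiM)
  moreover have "L.prob {a. R (a [])} = 1/2" using R prob_root by auto
  ultimately show ?thesis by simp
qed

lemma two_indep:
  assumes Q1: "Measurable.pred label_space Q1" and Q2: "Measurable.pred label_space Q2"
  shows "L.prob {a. Q1 (sh [False] a) \<and> Q2 (sh [True] a)} = L.prob {a. Q1 a} * L.prob {a. Q2 a}"
proof -
  define A :: "bool list set" where "A = range (Cons False)"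
  define B :: "bool list set" where "B = range (Cons True)"
  have ind: "L.indep_var (PiM A (\<lambda>_. M0)) (\<lambda>\<omega>. restrict (\<lambda>i. \<omega> i) A) (PiM B (\<lambda>_. M0)) (\<lambda>\<omega>. restrict (\<lambda>i. \<omega> i) B)"
    by (rule L.indep_var_restrict[OF indep_coords]) (auto simp: A_def B_def)
  have mA: "(\<lambda>h w. h (False # w)) \<in> PiM A (\<lambda>_. M0) \<rightarrow>\<^sub>M label_space"
    unfolding label_space_def
    by (rule measurable_PiM_single') (auto simp: space_PiM A_def intro: measurable_component_singleton)
  have mB: "(\<lambda>h w. h (True # w)) \<in> PiM B (\<lambda>_. M0) \<rightarrow>\<^sub>M label_space"
    unfolding label_space_def
    by (rule measurable_PiM_single') (auto simp: space_PiM B_def intro: measurable_component_singleton)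
  define Xa where "Xa = {h \<in> space (PiM A (\<lambda>_. M0)). Q1 (\<lambda>w. h (False # w))}"
  define Xb where "Xb = {h \<in> space (PiM B (\<lambda>_. M0)). Q2 (\<lambda>w. h (True # w))}"
  have Xa: "Xa \<in> sets (PiM A (\<lambda>_. M0))"
    using measurable_compose[OF mA Q1] unfolding Xa_def pred_def .
  have Xb: "Xb \<in> sets (PiM B (\<lambda>_. M0))"
    using measurable_compose[OF mB Q2] unfolding Xb_def pred_def .
  have "L.prob ((\<lambda>x. (restrict (\<lambda>i. x i) A, restrict (\<lambda>i. x i) B)) -` (Xa \<times> Xb) \<inter> space label_space) =
     L.prob ((\<lambda>x. restrict (\<lambda>i. x i) A) -` Xa \<inter> space label_space) * L.prob ((\<lambda>x. restrict (\<lambda>i. x i) B) -` Xb \<inter> space label_space)"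
    by (rule L.indep_varD[OF ind Xa Xb])
  moreover have "(\<lambda>x. (restrict (\<lambda>i. x i) A, restrict (\<lambda>i. x i) B)) -` (Xa \<times> Xb) \<inter> space label_space = {a. Q1 (sh [False] a) \<and> Q2 (sh [True] a)}"
    by (auto simp: Xa_def Xb_def space_L space_PiM A_def B_def sh_def)
  moreover have "(\<lambda>x. restrict (\<lambda>i. x i) A) -` Xa \<inter> space label_space = {a. Q1 (sh [False] a)}"
    by (auto simp: Xa_def space_L space_PiM A_def sh_def)
  moreover have "(\<lambda>x. restrict (\<lambda>i. x i) B) -` Xb \<inter> space label_space = {a. Q2 (sh [True] a)}"
    by (auto simp: Xb_def space_L space_PiM B_def sh_def)
  moreover have "L.prob {a. Q1 (sh [False] a)} = L.prob {a. Q1 a}"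
    by (rule prob_sh) (use Q1 in \<open>simp add: pred_def space_L\<close>)
  moreover have "L.prob {a. Q2 (sh [True] a)} = L.prob {a. Q2 a}"
    by (rule prob_sh) (use Q2 in \<open>simp add: pred_def space_L\<close>)
  ultimately show ?thesis by simp
qed



definition nxt :: "nat \<Rightarrow> bool \<Rightarrow> nat" where
  "nxt t c = (if t = 0 then (if c then 4 else 0)
     else if t = 1 then (if c then 0 else 2)
     else if t = 2 then (if c then 1 else 3)
     else if t = 3 then (if c then 3 else 4) else 4)"

fun alive :: "nat \<Rightarrow> nat \<Rightarrow> (bool list \<Rightarrow> real) \<Rightarrow> bool" where
  "alive t 0 a = True"
| "alive t (Suc n) a =
     (\<exists>b\<in>{False, True}. (sh [b] a [] = 1 \<and> nxt t True < 4 \<and> alive (nxt t True) n (sh [b] a)) \<or>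
        (sh [b] a [] \<noteq> 1 \<and> nxt t False < 4 \<and> alive (nxt t False) n (sh [b] a)))"

definition chd :: "nat \<Rightarrow> nat \<Rightarrow> (bool list \<Rightarrow> real) \<Rightarrow> bool" where
  "chd t n a = ((a [] = 1 \<and> nxt t True < 4 \<and> alive (nxt t True) n a) \<or>
        (a [] \<noteq> 1 \<and> nxt t False < 4 \<and> alive (nxt t False) n a))"

lemma alive_Suc': "alive t (Suc n) a = (chd t n (sh [False] a) \<or> chd t n (sh [True] a))"
  by (simp add: chd_def)

lemma alive_dep: "(\<forall>v. v \<noteq> [] \<longrightarrow> a v = a' v) \<Longrightarrow> alive t n a = alive t n a'"
proof (cases n)
  case (Suc m)
  assume h: "\<forall>v. v \<noteq> [] \<longrightarrow> a v = a' v"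
  have "sh [b] a = sh [b] a'" for b using h by (auto simp: sh_def)
  then show ?thesis unfolding Suc alive_Suc' by simp
qed simp

lemma alive_meas: "Measurable.pred label_space (alive t n)"
proof (induction n arbitrary: t)
  case 0 then show ?case by simp
next
  case (Suc n)
  have c: "Measurable.pred label_space (chd t n)" for t
    unfolding chd_def
    by (intro pred_intros_logic coord_pred Suc)
  have "Measurable.pred label_space (\<lambda>a. chd t n (sh [b] a))" for b
    using measurable_compose[OF sh_meas c] .
  then show ?case unfolding alive_Suc' by (intro pred_intros_logic) auto
qed

definition p :: "nat \<Rightarrow> nat \<Rightarrow> real" where "p t n = L.prob {a. alive t n a}"

lemma chd_meas: "Measurable.pred label_space (chd t n)"
  unfolding chd_def by (intro pred_intros_logic coord_pred alive_meas)

lemma prob_chd: "L.prob {a. chd t n a} =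
   1/2 * (if nxt t True < 4 then p (nxt t True) n else 0) + 1/2 * (if nxt t False < 4 then p (nxt t False) n else 0)"
proof -
  have "Measurable.pred label_space (\<lambda>a. a [] = 1 \<and> nxt t True < 4 \<and> alive (nxt t True) n a)"
    by (intro pred_intros_logic coord_pred alive_meas)
  then have m1: "{a. a [] = 1 \<and> nxt t True < 4 \<and> alive (nxt t True) n a} \<in> L.events"
    by (simp add: pred_def space_L)
  have "Measurable.pred label_space (\<lambda>a. a [] \<noteq> 1 \<and> nxt t False < 4 \<and> alive (nxt t False) n a)"
    by (intro pred_intros_logic coord_pred alive_meas)
  then have m2: "{a. a [] \<noteq> 1 \<and> nxt t False < 4 \<and> alive (nxt t False) n a} \<in> L.events"
    by (simp add: pred_def space_L)
  have "{a. chd t n a} = {a. a [] = 1 \<and> nxt t True < 4 \<and> alive (nxt t True) n a} \<union> {a. a [] \<noteq> 1 \<and> nxt t False < 4 \<and> alive (nxt t False) n a}"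
    by (auto simp: chd_def)
  then have "L.prob {a. chd t n a} = L.prob {a. a [] = 1 \<and> nxt t True < 4 \<and> alive (nxt t True) n a} + L.prob {a. a [] \<noteq> 1 \<and> nxt t False < 4 \<and> alive (nxt t False) n a}"
    using L.finite_measure_Union[OF m1 m2] by auto
  moreover have "L.prob {a. a [] = 1 \<and> nxt t True < 4 \<and> alive (nxt t True) n a} = 1/2 * (if nxt t True < 4 then p (nxt t True) n else 0)"
  proof (cases "nxt t True < 4")
    case True
    then show ?thesis using root_indep[OF alive_meas alive_dep, of "\<lambda>x. x = 1" "nxt t True" n] by (simp add: p_def)
  qed simp
  moreover have "L.prob {a. a [] \<noteq> 1 \<and> nxt t False < 4 \<and> alive (nxt t False) n a} = 1/2 * (if nxt t False < 4 then p (nxt t False) n else 0)"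
  proof (cases "nxt t False < 4")
    case True
    then show ?thesis using root_indep[OF alive_meas alive_dep, of "\<lambda>x. x \<noteq> 1" "nxt t False" n] by (simp add: p_def)
  qed simp
  ultimately show ?thesis by simp
qed

lemma p_Suc: "p t (Suc n) = 1 - (1 - L.prob {a. chd t n a})^2"
proof -
  have ev: "{a. chd t n a} \<in> L.events" using chd_meas by (simp add: pred_def space_L)
  have nc: "Measurable.pred label_space (\<lambda>a. \<not> chd t n a)" by (intro pred_intros_logic chd_meas)
  have "L.prob {a. \<not> chd t n (sh [False] a) \<and> \<not> chd t n (sh [True] a)} = L.prob {a. \<not> chd t n a} * L.prob {a. \<not> chd t n a}"
    by (rule two_indep[OF nc nc])
  moreover have "L.prob {a. \<not> chd t n a} = 1 - L.prob {a. chd t n a}"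
    using L.prob_compl[OF ev] by (simp add: space_L Compl_eq_Diff_UNIV[symmetric] Collect_neg_eq)
  moreover have "{a. alive t (Suc n) a} = UNIV - {a. \<not> chd t n (sh [False] a) \<and> \<not> chd t n (sh [True] a)}"
    by (auto simp: alive_Suc' simp del: alive.simps(2))
  moreover have "{a. \<not> chd t n (sh [False] a) \<and> \<not> chd t n (sh [True] a)} \<in> L.events"
  proof -
    have "Measurable.pred label_space (\<lambda>a. \<not> chd t n (sh [False] a) \<and> \<not> chd t n (sh [True] a))"
      by (intro pred_intros_logic measurable_compose[OF sh_meas nc])
    then show ?thesis by (simp add: pred_def space_L)
  qed
  ultimately show ?thesis unfolding p_def
    using L.prob_compl[of "{a. \<not> chd t n (sh [False] a) \<and> \<not> chd t n (sh [True] a)}"]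
    by (simp add: space_L power2_eq_square del: alive.simps(2))
qed



lemma conv0:
  fixes w e :: "nat \<Rightarrow> real"
  assumes w0: "\<And>n. 0 \<le> w n" and w1: "\<And>n. w n \<le> 1" and e: "e \<longlonglongrightarrow> 0"
    and rec: "\<And>n. w (Suc n) \<le> e n + w n - (w n)^2/4"
  shows "w \<longlonglongrightarrow> 0"
proof (rule LIMSEQ_I)
  fix r :: real assume r: "0 < r"
  define d where "d = min r 1 / 2"
  have d0: "0 < d" and d1: "d \<le> 1/2" and dr: "2 * d \<le> r" using r by (auto simp: d_def)
  define \<epsilon> where "\<epsilon> = d^2/16"
  have \<epsilon>0: "0 < \<epsilon>" using d0 by (simp add: \<epsilon>_def)
  obtain N0 where N0: "\<And>n. n \<ge> N0 \<Longrightarrow> norm (e n - 0) < \<epsilon>"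
    using LIMSEQ_D[OF e \<epsilon>0] by blast
  have eN: "e n < \<epsilon>" if "n \<ge> N0" for n using N0[OF that] by simp
  have step_big: "w (Suc n) \<le> w n - d^2/8" if "n \<ge> N0" "w n \<ge> d" for n
  proof -
    have "d^2 \<le> (w n)^2" using that d0 by (intro power_mono) auto
    moreover have "0 \<le> d^2" by simp
    ultimately show ?thesis using rec[of n] eN[OF that(1)] unfolding \<epsilon>_def by linarith
  qed
  have "\<exists>n\<ge>N0. w n < d"
  proof (rule ccontr)
    assume "\<not> ?thesis"
    then have big: "\<And>n. n \<ge> N0 \<Longrightarrow> w n \<ge> d" by force
    have "w (N0 + k) \<le> 1 - real k * d^2/8" for k
    proof (induction k)
      case 0 then show ?case using w1 by simp
    next
      case (Suc k)
      have "w (Suc (N0 + k)) \<le> w (N0 + k) - d^2/8" by (rule step_big) (auto intro: big)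
      then show ?case using Suc by (simp add: algebra_simps add_divide_distrib)
    qed
    moreover obtain k :: nat where "real k > 8 / d^2" using reals_Archimedean2 by blast
    then have "real k * d^2/8 > 1" using d0 by (simp add: field_simps)
    ultimately have "w (N0 + k) < 0" by (smt (verit))
    then show False using w0 by (smt (verit))
  qed
  then obtain n1 where n1: "n1 \<ge> N0" "w n1 < d" by blast
  have small: "w (n1 + k) < 2 * d" for k
  proof (induction k)
    case 0 then show ?case using n1 d0 by simp
  next
    case (Suc k)
    define n where "n = n1 + k"
    have nN: "n \<ge> N0" using n1 by (simp add: n_def)
    have IH: "w n < 2 * d" using Suc by (simp add: n_def)
    have "w (Suc n) < 2 * d"
    proof (cases "w n < d")
      case True
      have "w (Suc n) \<le> e n + w n" using rec[of n] by (smt (verit) zero_le_power2 divide_nonneg_pos)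
      also have "\<dots> < \<epsilon> + d" using eN[OF nN] True by simp
      also have "\<dots> \<le> 2 * d" using d0 d1 by (simp add: \<epsilon>_def power2_eq_square)
      finally show ?thesis .
    next
      case False
      then have "w (Suc n) \<le> w n - d^2/8" using step_big[OF nN] by simp
      moreover have "0 \<le> d^2" by simp
      ultimately show ?thesis using IH by linarith
    qed
    then show ?case by (simp add: n_def)
  qed
  show "\<exists>N. \<forall>n\<ge>N. norm (w n - 0) < r"
  proof (intro exI allI impI)
    fix n assume "n \<ge> n1"
    then obtain k where "n = n1 + k" using le_Suc_ex by blast
    then show "norm (w n - 0) < r" using small[of k] w0[of n] dr by simp
  qed
qed

lemma p_bounds: "0 \<le> p t n" "p t n \<le> 1"
  by (auto simp: p_def)

lemma p0_rec: "p 0 (Suc n) = 1 - (1 - p 0 n / 2)^2"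
  using p_Suc[of 0 n] prob_chd[of 0 n] by (simp add: nxt_def)
lemma p3_rec: "p 3 (Suc n) = 1 - (1 - p 3 n / 2)^2"
  using p_Suc[of 3 n] prob_chd[of 3 n] by (simp add: nxt_def)
lemma p1_rec: "p 1 (Suc n) = 1 - (1 - (p 0 n + p 2 n) / 2)^2"
  using p_Suc[of 1 n] prob_chd[of 1 n] by (simp add: nxt_def add_divide_distrib)
lemma p2_rec: "p 2 (Suc n) = 1 - (1 - (p 1 n + p 3 n) / 2)^2"
  using p_Suc[of 2 n] prob_chd[of 2 n] by (simp add: nxt_def add_divide_distrib)

lemma hbound:
  fixes x y w :: real
  assumes "0 \<le> x" "0 \<le> y" "y \<le> w" "w \<le> 1"
  shows "1 - (1 - (x + y)/2)^2 \<le> x + (w - w^2/4)"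
proof -
  have "1 - (1 - (x + y)/2)^2 = (x + y) - (x+y)^2/4" by (simp add: power2_eq_square field_simps)
  also have "\<dots> \<le> x + (y - y^2/4)" using assms by (simp add: power2_eq_square field_simps)
  also have "y - y^2/4 \<le> w - w^2/4"
  proof -
    have "(w - y) * (1 - (w + y)/4) \<ge> 0" using assms by (intro mult_nonneg_nonneg) auto
    then show ?thesis by (simp add: power2_eq_square field_simps)
  qed
  finally show ?thesis by simp
qed

lemma p_tendsto: "t < 4 \<Longrightarrow> (\<lambda>n. p t n) \<longlonglongrightarrow> 0"
proof -
  have z: "(\<lambda>n. 0::real) \<longlonglongrightarrow> 0" by simp
  have P0: "(\<lambda>n. p 0 n) \<longlonglongrightarrow> 0"
    by (rule conv0[where e="\<lambda>n. 0"]) (auto simp: p_bounds p0_rec power2_eq_square field_simps)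
  have P3: "(\<lambda>n. p 3 n) \<longlonglongrightarrow> 0"
    by (rule conv0[where e="\<lambda>n. 0"]) (auto simp: p_bounds p3_rec power2_eq_square field_simps)
  define w where "w n = max (p 1 n) (p 2 n)" for n
  have E: "(\<lambda>n. p 0 n + p 3 n) \<longlonglongrightarrow> 0" using tendsto_add[OF P0 P3] by simp
  have W: "w \<longlonglongrightarrow> 0"
  proof (rule conv0[OF _ _ E])
    show "0 \<le> w n" "w n \<le> 1" for n using p_bounds[of 1 n] p_bounds[of 2 n] by (auto simp: w_def)
    fix n
    have a: "p 1 (Suc n) \<le> p 0 n + (w n - (w n)^2/4)"
      unfolding p1_rec by (rule hbound) (use p_bounds[of 1 n] p_bounds[of 2 n] p_bounds[of 0 n] in \<open>auto simp: w_def\<close>)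
    have b: "p 2 (Suc n) \<le> p 3 n + (w n - (w n)^2/4)"
      unfolding p2_rec using hbound[of "p 3 n" "p 1 n" "w n"] p_bounds[of 1 n] p_bounds[of 2 n] p_bounds[of 3 n]
      by (auto simp: w_def add.commute)
    show "w (Suc n) \<le> p 0 n + p 3 n + w n - (w n)^2/4"
      using a b p_bounds[of 0 n] p_bounds[of 3 n] by (simp add: w_def)
  qed
  have P1: "(\<lambda>n. p 1 n) \<longlonglongrightarrow> 0"
    by (rule tendsto_sandwich[OF _ _ z W]) (auto simp: w_def p_bounds)
  have P2: "(\<lambda>n. p 2 n) \<longlonglongrightarrow> 0"
    by (rule tendsto_sandwich[OF _ _ z W]) (auto simp: w_def p_bounds)
  assume "t < 4"
  then have "t = 0 \<or> t = 1 \<or> t = 2 \<or> t = 3" by auto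
  then show ?thesis using P0 P1 P2 P3 by auto
qed



definition gg :: real where "gg = (sqrt 5 - 1) / 2"
definition ph :: real where "ph = (sqrt 5 + 1) / 2"

lemma s5: "sqrt 5 * sqrt 5 = 5" by simp
lemma s5b: "sqrt 5 > 2.2" "sqrt 5 < 2.3"
proof -
  show "sqrt 5 > 2.2" by (rule real_less_rsqrt) (simp add: power2_eq_square)
  have "sqrt 5 < sqrt (2.3^2)" by (rule real_sqrt_less_mono) (simp add: power2_eq_square)
  then show "sqrt 5 < 2.3" by simp
qed

lemma gph: "gg * ph = 1" "ph = 1 + gg" "gg^2 = 1 - gg" "ph * ph = ph + 1" "0 < gg" "gg < 1" "ph > 1.6" "ph < 1.7"
  using s5 s5b by (auto simp: gg_def ph_def power2_eq_square field_simps)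

definition labels01 :: "(bool list \<Rightarrow> real) \<Rightarrow> bool" where
  "labels01 a \<longleftrightarrow> (\<forall>v. a v = 0 \<or> a v = 1)"

lemma labels01_sh: "labels01 a \<Longrightarrow> labels01 (sh v a)"
  by (simp add: labels01_def sh_def)

abbreviation R :: "(bool list \<Rightarrow> real) \<Rightarrow> (nat \<Rightarrow> bool) \<Rightarrow> real" where
  "R a \<omega> \<equiv> coding_map gg a \<omega>"

lemma geo: "summable (\<lambda>j. gg ^ Suc j)" "(\<Sum>j. gg ^ Suc j) = ph"
proof -
  have s: "summable (\<lambda>j. gg ^ j)" using gph by (intro summable_geometric) auto
  then show "summable (\<lambda>j. gg ^ Suc j)" by (simp add: summable_mult)
  have "(\<Sum>j. gg ^ Suc j) = gg * (\<Sum>j. gg ^ j)" using s by (simp add: suminf_mult)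
  also have "\<dots> = gg / (1 - gg)" using gph by (subst suminf_geometric) auto
  also have "\<dots> = ph" using gph by (simp add: field_simps power2_eq_square)
  finally show "(\<Sum>j. gg ^ Suc j) = ph" .
qed

lemma R_summable: "labels01 a \<Longrightarrow> summable (\<lambda>j. a (prefix_word \<omega> (Suc j)) * gg ^ Suc j)"
proof -
  assume l: "labels01 a"
  have "norm (a v * gg^Suc j) \<le> gg^Suc j" for v j
    using l gph(5) by (cases "a v = 0") (auto simp: labels01_def)
  then show ?thesis by (intro summable_comparison_test'[OF geo(1), of 0]) auto
qed

lemma R_bounds: "labels01 a \<Longrightarrow> 0 \<le> R a \<omega> \<and> R a \<omega> \<le> ph"
proof -
  assume l: "labels01 a"
  have t: "0 \<le> a (prefix_word \<omega> (Suc j)) * gg ^ Suc j" "a (prefix_word \<omega> (Suc j)) * gg ^ Suc j \<le> gg ^ Suc j" for j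
    using l gph(5) by (cases "a (prefix_word \<omega> (Suc j)) = 0"; auto simp: labels01_def)+
  show ?thesis unfolding coding_map_def
    using suminf_nonneg[OF R_summable[OF l] t(1)] suminf_le[OF t(2) R_summable[OF l] geo(1)] geo(2) by simp
qed

lemma prefix_Suc: "prefix_word \<omega> (Suc (Suc j)) = \<omega> 0 # prefix_word (\<lambda>k. \<omega> (Suc k)) (Suc j)"
  unfolding prefix_word_def by (simp only: upt_conv_Cons[of 0] zero_less_Suc map_Suc_upt[symmetric]) (simp add: map_Suc_upt upt_conv_Cons)

lemma R_step: "labels01 a \<Longrightarrow> R (sh [\<omega> 0] a) (\<lambda>k. \<omega> (Suc k)) = ph * R a \<omega> - a [\<omega> 0]"
proof -
  assume l: "labels01 a"
  define f where "f j = a (prefix_word \<omega> (Suc j)) * gg ^ Suc j" for j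
  have s: "summable f" unfolding f_def by (rule R_summable[OF l])
  have "R a \<omega> = suminf f" unfolding coding_map_def f_def ..
  then have "R a \<omega> = f 0 + (\<Sum>j. f (Suc j))" using suminf_split_head[OF s] by simp
  moreover have "f 0 = a [\<omega> 0] * gg" by (simp add: f_def prefix_word_def)
  moreover have "f (Suc j) = gg * (sh [\<omega> 0] a (prefix_word (\<lambda>k. \<omega> (Suc k)) (Suc j)) * gg ^ Suc j)" for j
    by (simp add: f_def prefix_Suc sh_def)
  moreover have "(\<Sum>j. gg * (sh [\<omega> 0] a (prefix_word (\<lambda>k. \<omega> (Suc k)) (Suc j)) * gg ^ Suc j)) = gg * R (sh [\<omega> 0] a) (\<lambda>k. \<omega> (Suc k))"
    unfolding coding_map_def by (rule suminf_mult[OF R_summable[OF labels01_sh[OF l]]])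
  ultimately have "R a \<omega> = a [\<omega> 0] * gg + gg * R (sh [\<omega> 0] a) (\<lambda>k. \<omega> (Suc k))" by simp
  then have "ph * R a \<omega> = a [\<omega> 0] * (gg * ph) + (gg * ph) * R (sh [\<omega> 0] a) (\<lambda>k. \<omega> (Suc k))"
    by (simp add: algebra_simps)
  then show ?thesis using gph(1) by simp
qed



definition val :: "nat \<Rightarrow> real" where
  "val t = (if t = 0 then 0 else if t = 1 then gg else if t = 2 then 1 else ph)"

lemma nxt_ok:
  assumes t: "t < 4" and c: "c = 0 \<or> c = 1" and y: "y = ph * val t - c" "0 \<le> y" "y \<le> ph"
  shows "nxt t (c = 1) < 4 \<and> val (nxt t (c = 1)) = y"
proof -
  have "t = 0 \<or> t = 1 \<or> t = 2 \<or> t = 3" using t by auto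
  moreover have "ph * gg = 1" using gph(1) by (simp add: mult.commute)
  ultimately show ?thesis using c y gph by (auto simp: nxt_def val_def)
qed

lemma alive_of_R: "labels01 a \<Longrightarrow> R a \<omega> = val t \<Longrightarrow> t < 4 \<Longrightarrow> alive t n a"
proof (induction n arbitrary: t a \<omega>)
  case 0 then show ?case by simp
next
  case (Suc n)
  define b where "b = \<omega> 0"
  define y where "y = R (sh [b] a) (\<lambda>k. \<omega> (Suc k))"
  have y: "y = ph * val t - a [b]" using R_step[OF Suc.prems(1), of \<omega>] Suc.prems(2) by (simp add: y_def b_def)
  have yb: "0 \<le> y" "y \<le> ph" using R_bounds[OF labels01_sh[OF Suc.prems(1)]] by (auto simp: y_def)
  have c: "a [b] = 0 \<or> a [b] = 1" using Suc.prems(1) by (simp add: labels01_def)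
  have ok: "nxt t (a [b] = 1) < 4 \<and> val (nxt t (a [b] = 1)) = y" by (rule nxt_ok[OF Suc.prems(3) c y yb])
  have IH: "alive (nxt t (a [b] = 1)) n (sh [b] a)"
    by (rule Suc.IH[where a="sh [b] a" and \<omega>="\<lambda>k. \<omega> (Suc k)"]) (use ok labels01_sh[OF Suc.prems(1)] in \<open>simp_all add: y_def\<close>)
  have shb: "sh [b] a [] = a [b]" by (simp add: sh_def)
  show ?case
  proof (cases "a [b] = 1")
    case True
    then show ?thesis using ok IH shb by (cases b) auto
  next
    case False
    then show ?thesis using ok IH shb by (cases b) auto
  qed
qed

definition zval :: "int \<Rightarrow> int \<Rightarrow> real" where "zval i j = of_int i + of_int j * ph"
definition zconj :: "int \<Rightarrow> int \<Rightarrow> real" where "zconj i j = of_int i - of_int j * gg"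

lemma sh_Cons: "sh v (sh [b] a) = sh (b # v) a" by (simp add: sh_def)
lemma sh_Nil: "sh [] a = a" by (simp add: sh_def)

lemma lemmaA:
  "labels01 a \<Longrightarrow> R a \<omega> = zval i j \<Longrightarrow> 0 \<le> e \<Longrightarrow> -ph - e \<le> zconj i j \<Longrightarrow> zconj i j \<le> 1 + e \<Longrightarrow>
   \<exists>v i' j'. length v = n \<and> R (sh v a) (\<lambda>k. \<omega> (k + n)) = zval i' j' \<and>
      -ph - gg^n * e \<le> zconj i' j' \<and> zconj i' j' \<le> 1 + gg^n * e"
proof (induction n arbitrary: a \<omega> i j e)
  case 0
  then show ?case by (intro exI[of _ "[]"] exI[of _ i] exI[of _ j]) (simp add: sh_Nil)
next
  case (Suc n)
  define b where "b = \<omega> 0"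
  define ci :: int where "ci = (if a [b] = 1 then 1 else 0)"
  have ci: "a [b] = of_int ci" "ci = 0 \<or> ci = 1" using Suc.prems(1) by (auto simp: ci_def labels01_def)
  have R1: "R (sh [b] a) (\<lambda>k. \<omega> (Suc k)) = zval (j - ci) (i + j)"
    using R_step[OF Suc.prems(1), of \<omega>] Suc.prems(2) ci(1) gph(4)
    by (simp add: b_def zval_def algebra_simps mult.assoc[symmetric])
  have cj: "zconj (j - ci) (i + j) = - gg * zconj i j - of_int ci"
  proof -
    have gg2: "gg * gg = 1 - gg" using gph(3) by (simp add: power2_eq_square)
    have gx: "gg * (gg * x) = x - gg * x" for x :: real
      by (simp add: mult.assoc[symmetric] gg2 algebra_simps)
    show ?thesis by (simp add: zconj_def algebra_simps gx)
  qed
  have e1: "0 \<le> gg * e" using gph Suc.prems(3) by simp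
  have lo: "-ph - gg * e \<le> zconj (j - ci) (i + j)"
  proof -
    have "gg * zconj i j \<le> gg * (1 + e)" using Suc.prems(5) gph by (intro mult_left_mono) auto
    then show ?thesis unfolding cj using ci(2) gph(1,2) by (auto simp: algebra_simps) 
  qed
  have hi: "zconj (j - ci) (i + j) \<le> 1 + gg * e"
  proof -
    have "gg * (-ph - e) \<le> gg * zconj i j" using Suc.prems(4) gph by (intro mult_left_mono) auto
    then show ?thesis unfolding cj using ci(2) gph(1,2) by (auto simp: algebra_simps)
  qed
  obtain v i' j' where v: "length v = n" "R (sh v (sh [b] a)) (\<lambda>k. \<omega> (Suc (k + n))) = zval i' j'"
    "-ph - gg^n * (gg * e) \<le> zconj i' j'" "zconj i' j' \<le> 1 + gg^n * (gg * e)"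
    using Suc.IH[OF labels01_sh[OF Suc.prems(1)] R1 e1 lo hi] by auto
  show ?case
    by (intro exI[of _ "b # v"] exI[of _ i'] exI[of _ j']) (use v in \<open>simp add: sh_Cons mult.assoc mult.commute mult.left_commute\<close>)
qed



lemma classify:
  assumes "0 \<le> zval i j" "zval i j \<le> ph" "-ph - 1/2 \<le> zconj i j" "zconj i j \<le> 3/2"
  shows "\<exists>t<4. zval i j = val t"
proof -
  have d: "of_int j * sqrt 5 = zval i j - zconj i j"
    by (simp add: zval_def zconj_def gg_def ph_def algebra_simps add_divide_distrib diff_divide_distrib)
  have j0: "j \<ge> 0"
  proof (rule ccontr)
    assume "\<not> j \<ge> 0"
    then have "of_int j \<le> (-1::real)" by simp
    then have "of_int j * sqrt 5 \<le> -1 * sqrt 5" by (intro mult_right_mono) auto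
    then show False using d assms s5b gph by simp
  qed
  have j1: "j \<le> 1"
  proof (rule ccontr)
    assume "\<not> j \<le> 1"
    then have "of_int j \<ge> (2::real)" by simp
    then have "of_int j * sqrt 5 \<ge> 2 * sqrt 5" by (intro mult_right_mono) auto
    then show False using d assms s5b gph by simp
  qed
  have "j = 0 \<or> j = 1" using j0 j1 by auto
  then show ?thesis
  proof
    assume j: "j = 0"
    then have "(0::real) \<le> of_int i" "of_int i \<le> ph" using assms(1,2) by (simp_all add: zval_def)
    then have "(0::real) \<le> of_int i" "of_int i < (2::real)" using gph(8) by linarith+
    then have "i = 0 \<or> i = 1" by linarith
    then show ?thesis
    proof (elim disjE)
      assume "i = 0" then show ?thesis using j by (intro exI[of _ 0]) (simp add: zval_def val_def)
    next
      assume "i = 1" then show ?thesis using j by (intro exI[of _ 2]) (simp add: zval_def val_def)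
    qed
  next
    assume j: "j = 1"
    then have "0 \<le> of_int i + ph" "of_int i + ph \<le> ph" using assms(1,2) by (simp_all add: zval_def)
    then have "(-2::real) < of_int i" "of_int i \<le> (0::real)" using gph(8) by linarith+
    then have "i = -1 \<or> i = 0" by linarith
    then show ?thesis
    proof (elim disjE)
      assume "i = -1" then show ?thesis using j gph(2) by (intro exI[of _ 1]) (simp add: zval_def val_def)
    next
      assume "i = 0" then show ?thesis using j by (intro exI[of _ 3]) (simp add: zval_def val_def)
    qed
  qed
qed

lemma gg_pow_z: "\<exists>i j. gg^m = zval i j"
proof (induction m)
  case 0 then show ?case by (intro exI[of _ 1] exI[of _ 0]) (simp add: zval_def)
next
  case (Suc m)
  then obtain i j where "gg^m = zval i j" by blast
  then have "gg^Suc m = gg * of_int i + (gg * ph) * of_int j" by (simp add: zval_def algebra_simps)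
  also have "\<dots> = gg * of_int i + of_int j" using gph(1) by simp
  also have "\<dots> = zval (j - i) i"
  proof -
    have pg: "ph = 1 + gg" by (rule gph(2))
    show ?thesis unfolding zval_def pg by (simp add: algebra_simps)
  qed
  finally have "gg^Suc m = zval (j - i) i" .
  then show ?case by blast
qed

lemma zdense: "x < y \<Longrightarrow> \<exists>i j. x < zval i j \<and> zval i j < y"
proof -
  assume xy: "x < y"
  obtain m where m: "gg^m < y - x" using real_arch_pow_inv[of "y - x" gg] xy gph by auto
  obtain i j where ij: "gg^m = zval i j" using gg_pow_z by blast
  have pos: "gg^m > 0" using gph by simp
  define k where "k = \<lfloor>x / gg^m\<rfloor> + 1"
  have k1: "x / gg^m < of_int k" unfolding k_def by linarith
  have k2: "of_int k \<le> x / gg^m + 1" unfolding k_def by linarith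
  have a: "x < of_int k * gg^m" using k1 pos by (simp add: field_simps)
  have "of_int k * gg^m \<le> (x / gg^m + 1) * gg^m" by (rule mult_right_mono) (use k2 pos in auto)
  moreover have "(x / c + 1) * c = x + c" if "c > 0" for c :: real using that by (simp add: field_simps)
  ultimately have b: "of_int k * gg^m \<le> x + gg^m" using pos by simp
  have "of_int k * gg^m = zval (k * i) (k * j)" using ij by (simp add: zval_def algebra_simps)
  then show ?thesis using a b m by (intro exI[of _ "k * i"] exI[of _ "k * j"]) auto
qed

lemma td: "(\<And>i j. zval i j \<notin> S) \<Longrightarrow> totally_disconnected (S::real set)"
  unfolding totally_disconnected_def
proof (intro ballI)
  fix x assume nz: "\<And>i j. zval i j \<notin> S" and x: "x \<in> S"
  define C where "C = connected_component_set S x"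
  have CS: "C \<subseteq> S" unfolding C_def by (rule connected_component_subset)
  have xC: "x \<in> C" using x by (simp add: C_def)
  have iC: "is_interval C" unfolding C_def is_interval_connected_1 by simp
  have "y = x" if y: "y \<in> C" for y
  proof (rule ccontr)
    assume "y \<noteq> x"
    then have "y < x \<or> x < y" by linarith
    then obtain u w where uw: "u \<in> C" "w \<in> C" "u < w" using xC y by blast
    obtain i j where z: "u < zval i j" "zval i j < w" using zdense[OF uw(3)] by blast
    have "\<forall>a\<in>C. \<forall>b\<in>C. \<forall>z. a \<le> z \<and> z \<le> b \<longrightarrow> z \<in> C" using iC unfolding is_interval_1 .
    then have "zval i j \<in> C" using uw(1,2) z less_imp_le by blast
    then show False using CS nz by auto
  qed
  then show "connected_component_set S x = {x}" using xC by (auto simp: C_def)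
qed



lemma AE_labels01: "AE a in label_space. labels01 a"
proof -
  have "AE a in label_space. a v = 0 \<or> a v = 1" for v
  proof -
    have "AE x in M0. x = 0 \<or> x = 1" by (simp add: AE_measure_pmf_iff)
    then show ?thesis unfolding label_space_def
      by (rule AE_PiM_component[where M="\<lambda>_. M0" and I=UNIV, rotated 2]) (auto simp: prob_space_measure_pmf)
  qed
  then have "AE a in label_space. \<forall>v. a v = 0 \<or> a v = 1" by (simp add: AE_all_countable)
  then show ?thesis by (simp add: labels01_def)
qed

lemma key: "AE a in label_space. labels01 a \<longrightarrow> zval i j \<notin> range (R a)"
proof -
  define e where "e = \<bar>zconj i j\<bar> + ph + 1"
  have e0: "0 < e" using gph by (simp add: e_def add_pos_nonneg)
  obtain N where N: "gg^N < 1 / (2 * e)" using real_arch_pow_inv[of "1 / (2 * e)" gg] e0 gph by auto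
  have Ne: "gg^N * e \<le> 1/2" using N e0 by (simp add: field_simps)
  define I where "I = {v :: bool list. length v = N} \<times> {..<4::nat}"
  have finI: "finite I" unfolding I_def using finite_lists_length_eq[of "UNIV :: bool set" N] by simp
  define A where "A k vt = {a. alive (snd vt) k (sh (fst vt) a)}" for k vt
  define U where "U k = (\<Union>vt\<in>I. A k vt)" for k
  define Z where "Z = (\<Inter>k. U k)"
  have Aev: "A k vt \<in> L.events" for k vt
  proof -
    have "Measurable.pred label_space (\<lambda>a. alive (snd vt) k (sh (fst vt) a))"
      using measurable_compose[OF sh_meas alive_meas] .
    then show ?thesis by (simp add: A_def pred_def space_L)
  qed
  have Uev: "U k \<in> L.events" for k unfolding U_def using finI Aev by auto
  have Zev: "Z \<in> L.events" unfolding Z_def using Uev by auto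
  have PA: "L.prob (A k vt) = p (snd vt) k" for k vt
  proof -
    have "{a. alive (snd vt) k a} \<in> L.events" using alive_meas by (simp add: pred_def space_L)
    then show ?thesis unfolding A_def p_def by (rule prob_sh)
  qed
  have PU: "L.prob (U k) \<le> (\<Sum>vt\<in>I. p (snd vt) k)" for k
    unfolding U_def PA[symmetric] using finI Aev by (intro L.finite_measure_subadditive_finite) auto
  have lim: "(\<lambda>k. \<Sum>vt\<in>I. p (snd vt) k) \<longlonglongrightarrow> 0"
    by (rule tendsto_null_sum) (use p_tendsto in \<open>auto simp: I_def\<close>)
  have "L.prob Z \<le> 0"
  proof (rule LIMSEQ_le_const[OF lim], intro exI allI impI)
    fix k
    have "L.prob Z \<le> L.prob (U k)" using Zev Uev by (intro L.finite_measure_mono) (auto simp: Z_def)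
    then show "L.prob Z \<le> (\<Sum>vt\<in>I. p (snd vt) k)" using PU[of k] by linarith
  qed
  then have Znull: "Z \<in> null_sets label_space"
    using Zev measure_nonneg[of label_space Z] by (intro null_setsI) (simp add: L.emeasure_eq_measure)
  have sub: "{a \<in> space label_space. \<not> (labels01 a \<longrightarrow> zval i j \<notin> range (R a))} \<subseteq> Z"
  proof (intro subsetI)
    fix a assume "a \<in> {a \<in> space label_space. \<not> (labels01 a \<longrightarrow> zval i j \<notin> range (R a))}"
    then have l: "labels01 a" and "zval i j \<in> range (R a)" by auto
    then obtain \<omega> where eq: "zval i j = R a \<omega>" by blast
    have "-ph - e \<le> zconj i j" "zconj i j \<le> 1 + e" using gph(7) unfolding e_def by linarith+
    from lemmaA[OF l eq[symmetric] less_imp_le[OF e0] this, of N]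
    obtain v i' j' where v: "length v = N" "R (sh v a) (\<lambda>k. \<omega> (k + N)) = zval i' j'"
      "-ph - gg^N * e \<le> zconj i' j'" "zconj i' j' \<le> 1 + gg^N * e" by blast
    have b: "0 \<le> zval i' j'" "zval i' j' \<le> ph" using R_bounds[OF labels01_sh[OF l, of v], where \<omega>="\<lambda>k. \<omega> (k + N)"] v(2) by auto
    have c1: "-ph - 1/2 \<le> zconj i' j'" "zconj i' j' \<le> 3/2" using v(3,4) Ne by linarith+
    obtain t where t: "t < 4" "zval i' j' = val t"
      using classify[OF b c1] by blast
    have al: "alive t k (sh v a)" for k
      by (rule alive_of_R[OF labels01_sh[OF l] _ t(1)]) (use v(2) t(2) in simp)
    show "a \<in> Z" unfolding Z_def U_def A_def I_def using v(1) t(1) al by auto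
  qed
  show ?thesis by (rule AE_I'[OF Znull sub])
qed

theorem corollary1p6:
  shows "AE a in label_space.
           totally_disconnected (attractor ((sqrt 5 - 1) / 2) a)"
proof -
  have "AE a in label_space. \<forall>ij\<in>UNIV. labels01 a \<longrightarrow> zval (fst ij) (snd ij) \<notin> range (R a)"
    by (subst AE_ball_countable) (auto intro: key)
  then show ?thesis using AE_labels01
  proof eventually_elim
    case (elim a)
    have "zval i j \<notin> attractor ((sqrt 5 - 1) / 2) a" for i j
      using elim(1)[rule_format, of "(i, j)"] elim(2) by (simp add: attractor_def gg_def)
    then show ?case by (rule td)
  qed
qed


end
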